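(* Let $\mathcal{X}$ be an input space, $\mathcal{Y}$ an output space, and $d_{\mathcal{X}}:\mathcal{X}\times\mathcal{X}\to\mathbb{R}_{\ge 0}$ a distance function. Define $d$ on $\mathcal{X}\times\mathcal{Y}$ by $d((x_1,y_1),(x_2,y_2)) = d_{\mathcal{X}}(x_1,x_2)$ if $y_1=y_2$ and $d((x_1,y_1),(x_2,y_2))=\infty$ otherwise. Let $\mathcal{D}$ and $\tilde{\mathcal{D}}$ be probability distributions on $\mathcal{X}\times\mathcal{Y}$ such that $W_1^{d}(\mathcal{D},\tilde{\mathcal{D}})\le \epsilon$ for a real number $\epsilon\ge 0$, in the sense that there exists a coupling $\gamma^*$ of $\mathcal{D}$ and $\tilde{\mathcal{D}}$ (a joint distribution on $(\mathcal{X}\times\mathcal{Y})^2$ with marginals $\mathcal{D}$ and $\tilde{\mathcal{D}}$) with $\mathbb{E}_{(\tau_1,\tau_2)\sim\gamma^*}[d(\tau_1,\tau_2)]\le\epsilon$. Let $\mathcal{S}:\mathcal{X}\to\Delta(\mathcal{X})$ assign to each $x\in\mathcal{X}$ a probability distribution $\mathcal{S}(x)$ on $\mathcal{X}$, and let $\psi:\mathbb{R}_{\ge0}\to\mathbb{R}$ be a concave non-decreasing function such that $\mathrm{TV}(\mathcal{S}(x_1),\mathcal{S}(x_2))\le \psi(d_{\mathcal{X}}(x_1,x_2))$ for all $x_1,x_2\in\mathcal{X}$. Given a function $h:\mathcal{X}\times\mathcal{Y}\to[0,1]$, define its smoothed version $\bar h(x,y)=\mathbb{E}_{x'\sim\mathcal{S}(x)}[h(x',y)]$.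 Then \[\left|\mathbb{E}_{(x_1,y_1)\sim\mathcal{D}}[\bar h(x_1,y_1)] - \mathbb{E}_{(x_2,y_2)\sim\tilde{\mathcal{D}}}[\bar h(x_2,y_2)]\right|\le \psi(\epsilon).\]
   Context: $\mathrm{TV}$ denotes total variation distance between probability distributions, $\mathrm{TV}(\mu_1,\mu_2)=\tfrac12\int|\mu_1-\mu_2|$. $\Delta(\mathcal{X})$ denotes the set of probability distributions over $\mathcal{X}$. $W_1^d$ is the 1-Wasserstein distance with respect to the cost $d$. *)

theory Defs
  imports "HOL-Probability.Probability"
begin

text \<open>Total variation distance between two (probability) measures on the same
  measurable space: the largest discrepancy on a measurable event
  (for probability measures this equals one half of the total variation norm
  of the difference).\<close>
definition tv_dist :: "'a measure \<Rightarrow> 'a measure \<Rightarrow> real" where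
  "tv_dist \<mu>1 \<mu>2 = (SUP A \<in> sets \<mu>1. \<bar>measure \<mu>1 A - measure \<mu>2 A\<bar>)"

definition lift_cost :: "('x \<Rightarrow> 'x \<Rightarrow> real) \<Rightarrow> ('x \<times> 'y) \<Rightarrow> ('x \<times> 'y) \<Rightarrow> ennreal" where
  "lift_cost dX t1 t2 = (if snd t1 = snd t2 then ennreal (dX (fst t1) (fst t2)) else \<infinity>)"

definition smoothed :: "('x \<Rightarrow> 'x measure) \<Rightarrow> ('x \<times> 'y \<Rightarrow> real) \<Rightarrow> 'x \<times> 'y \<Rightarrow> real" where
  "smoothed S h p = (\<integral>x'. h (x', snd p) \<partial>S (fst p))"

end

theory Submission
  imports Defs
begin
lemma concave_supergrad:
  fixes \<psi> :: "real \<Rightarrow> real"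
  assumes cc: "concave_on {0..} \<psi>" and mo: "mono_on {0..} \<psi>" and ep: "\<epsilon> > 0"
  shows "\<exists>c\<ge>0. \<forall>t\<ge>0. \<psi> t \<le> \<psi> \<epsilon> + c * (t - \<epsilon>)"
proof -
  have cv: "convex_on {0..} (\<lambda>x. - \<psi> x)" using cc by (simp add: concave_on_def)
  have chord: "(\<psi> t - \<psi> \<epsilon>) / (t - \<epsilon>) \<le> (\<psi> \<epsilon> - \<psi> s) / (\<epsilon> - s)"
    if "0 \<le> s" "s < \<epsilon>" "\<epsilon> < t" for s t
  proof -
    have 1: "((- \<psi> s) - (- \<psi> \<epsilon>)) / (s - \<epsilon>) \<le> ((- \<psi> s) - (- \<psi> t)) / (s - t)"
     and 2: "((- \<psi> s) - (- \<psi> t)) / (s - t) \<le> ((- \<psi> \<epsilon>) - (- \<psi> t)) / (\<epsilon> - t)"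
      using convex_on_slope_le[OF cv, of s t \<epsilon>] that by auto
    have "((- \<psi> s) - (- \<psi> \<epsilon>)) / (s - \<epsilon>) = - ((\<psi> \<epsilon> - \<psi> s) / (\<epsilon> - s))"
      using that by (simp add: field_simps)
    moreover have "((- \<psi> \<epsilon>) - (- \<psi> t)) / (\<epsilon> - t) = - ((\<psi> t - \<psi> \<epsilon>) / (t - \<epsilon>))"
      using that by (simp add: field_simps)
    ultimately show ?thesis using 1 2 by linarith
  qed
  define Sl where "Sl = (\<lambda>s. (\<psi> \<epsilon> - \<psi> s) / (\<epsilon> - s)) ` {0..<\<epsilon>}"
  define c where "c = Inf Sl"
  have ne: "Sl \<noteq> {}" using ep by (auto simp: Sl_def)
  have lb: "(\<psi> (\<epsilon>+1) - \<psi> \<epsilon>) / ((\<epsilon>+1) - \<epsilon>) \<le> x" if "x \<in> Sl" for x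
    using that chord[of _ "\<epsilon>+1"] by (auto simp: Sl_def)
  have bdd: "bdd_below Sl" using lb by (auto simp: bdd_below_def)
  have c_ge: "(\<psi> (\<epsilon>+1) - \<psi> \<epsilon>) / ((\<epsilon>+1) - \<epsilon>) \<le> c"
    unfolding c_def by (rule cInf_greatest[OF ne lb])
  have "\<psi> \<epsilon> \<le> \<psi> (\<epsilon>+1)" using mo ep by (auto intro: mono_onD)
  hence c0: "c \<ge> 0" using c_ge by simp
  have "\<psi> t \<le> \<psi> \<epsilon> + c * (t - \<epsilon>)" if t: "t \<ge> 0" for t
  proof (cases "t < \<epsilon>")
    case True
    have "c \<le> (\<psi> \<epsilon> - \<psi> t) / (\<epsilon> - t)"
      unfolding c_def by (rule cInf_lower[OF _ bdd]) (use True t in \<open>auto simp: Sl_def\<close>)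
    hence "c * (\<epsilon> - t) \<le> \<psi> \<epsilon> - \<psi> t" using True by (simp add: le_divide_eq)
    thus ?thesis by (simp add: algebra_simps)
  next
    case False
    show ?thesis
    proof (cases "t = \<epsilon>")
      case True thus ?thesis by simp
    next
      case False2: False
      hence tg: "t > \<epsilon>" using False by simp
      have "(\<psi> t - \<psi> \<epsilon>) / (t - \<epsilon>) \<le> c"
        unfolding c_def by (rule cInf_greatest[OF ne]) (use chord tg in \<open>auto simp: Sl_def\<close>)
      hence "\<psi> t - \<psi> \<epsilon> \<le> c * (t - \<epsilon>)" using tg by (simp add: divide_le_eq)
      thus ?thesis by simp
    qed
  qed
  thus ?thesis using c0 by blast
qed

lemma floor_count:
  fixes n :: nat and y :: real
  assumes n: "n > 0" and y: "0 \<le> y" "y \<le> 1"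
  shows "y - 1 / n \<le> (\<Sum>k\<in>{1..n}. if real k / n \<le> y then 1 else 0) / n
       \<and> (\<Sum>k\<in>{1..n}. if real k / n \<le> y then 1 else (0::real)) / n \<le> y"
proof -
  define m where "m = nat \<lfloor>n * y\<rfloor>"
  have fl0: "\<lfloor>n * y\<rfloor> \<ge> 0" using y by simp
  have mle: "real m \<le> n * y" unfolding m_def using fl0 by simp
  have mgt: "n * y - 1 < real m" unfolding m_def using fl0 by linarith
  have "real n * y \<le> real n" using y by (simp add: mult_left_le)
  hence mn: "m \<le> n" using mle by linarith
  have eq: "{k\<in>{1..n}. real k / n \<le> y} = {1..m}"
  proof safe
    fix k assume k: "k \<in> {1..n}" "real k / n \<le> y"
    hence "real k \<le> n * y" using n by (simp add: divide_le_eq mult.commute)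
    hence "int k \<le> \<lfloor>n * y\<rfloor>" by (simp add: le_floor_iff)
    hence "k \<le> m" unfolding m_def by simp
    hence "real k \<le> m" by simp
    thus "k \<in> {1..m}" using k by auto
  next
    fix k assume "k \<in> {1..m}"
    thus "k \<in> {1..n}" using mn by auto
    have "real k \<le> n * y" using \<open>k \<in> {1..m}\<close> mle by auto
    thus "real k / n \<le> y" using n by (simp add: divide_le_eq mult.commute)
  qed
  have "(\<Sum>k\<in>{1..n}. if real k / n \<le> y then 1 else (0::real)) = real (card {k\<in>{1..n}. real k / n \<le> y})"
    by (simp add: sum.If_cases; rule arg_cong[where f=card]; auto)
  also have "\<dots> = real m" using eq by simp
  finally have s: "(\<Sum>k\<in>{1..n}. if real k / n \<le> y then 1 else (0::real)) = real m" .
  have a: "real m / n \<le> y" using mle n by (simp add: divide_le_eq mult.commute)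
  have "(y*n-1)/n \<le> real m/n" by (rule divide_right_mono) (use mgt in \<open>auto simp: mult.commute\<close>)
  moreover have "(y*n-1)/n = y - 1/n" using n by (simp add: field_simps)
  ultimately have b: "y - 1/n \<le> real m / n" by simp
  show ?thesis unfolding s using a b by simp
qed

lemma int_ind_sum:
  assumes "finite_measure M" and "\<And>k. A k \<in> sets M"
  shows "(\<integral>x. (\<Sum>k\<in>K. indicator (A k) x) / c \<partial>M) = (\<Sum>k\<in>K. measure M (A k)) / (c::real)"
proof -
  interpret finite_measure M by fact
  have integ: "integrable M (indicator (A k) :: _ \<Rightarrow> real)" for k
  proof -
    have "A k \<inter> space M = A k" using assms(2) sets.sets_into_space by blast
    thus ?thesis using assms(2)[of k] emeasure_finite[of "A k"]
      by (simp add: integrable_indicator_iff less_top[symmetric])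
  qed
  have "(\<integral>x. (\<Sum>k\<in>K. indicator (A k) x) \<partial>M) = (\<Sum>k\<in>K. (\<integral>x. indicator (A k) x \<partial>M) :: real)"
    by (intro Bochner_Integration.integral_sum integ)
  also have "\<dots> = (\<Sum>k\<in>K. measure M (A k))"
    using assms(2) by (intro sum.cong) auto
  finally show ?thesis by simp
qed

lemma tv_key:
  fixes \<mu> \<nu> :: "'a measure" and f :: "'a \<Rightarrow> real"
  assumes pm: "prob_space \<mu>" and pn: "prob_space \<nu>" and sets_eq: "sets \<nu> = sets \<mu>"
    and fm: "f \<in> borel_measurable \<mu>" and fr: "\<And>x. x \<in> space \<mu> \<Longrightarrow> 0 \<le> f x \<and> f x \<le> 1"
    and n: "n > 0" and sw: "\<And>A. A \<in> sets \<mu> \<Longrightarrow> measure \<mu> A - measure \<nu> A \<le> T"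
  shows "(\<integral>x. f x \<partial>\<mu>) - (\<integral>x. f x \<partial>\<nu>) \<le> T + 1 / real n"
proof -
  interpret M: prob_space \<mu> by fact
  interpret N: prob_space \<nu> by fact
  have sp: "space \<nu> = space \<mu>" using sets_eq by (rule sets_eq_imp_space_eq)
  have fmn: "f \<in> borel_measurable \<nu>" using fm measurable_cong_sets[OF sets_eq refl] by blast
  define A where "A k = {x\<in>space \<mu>. real k / n \<le> f x}" for k :: nat
  have As: "A k \<in> sets \<mu>" for k unfolding A_def using fm by measurable
  have Asn: "A k \<in> sets \<nu>" for k using As sets_eq by simp
  define g where "g x = (\<Sum>k\<in>{1..n}. indicator (A k) x) / real n" for x
  have g_alt: "g x = (\<Sum>k\<in>{1..n}. if real k / n \<le> f x then 1 else (0::real)) / n" if "x \<in> space \<mu>" for x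
  proof -
    have "indicator (A k) x = (if real k / n \<le> f x then 1 else (0::real))" for k
      using that by (simp add: A_def indicator_def)
    thus ?thesis unfolding g_def by simp
  qed
  have gb: "f x - 1/n \<le> g x \<and> g x \<le> f x" if "x \<in> space \<mu>" for x
    using floor_count[OF n, of "f x"] fr[OF that] g_alt[OF that] by simp
  have g0: "0 \<le> g x" for x unfolding g_def by (simp add: sum_nonneg)
  have gm: "g \<in> borel_measurable \<mu>" unfolding g_def using As by measurable
  have gmn: "g \<in> borel_measurable \<nu>" using gm measurable_cong_sets[OF sets_eq refl] by blast
  have bnd: "norm (f x) \<le> 1" "norm (g x) \<le> 1" if "x \<in> space \<mu>" for x
    using gb[OF that] fr[OF that] g0 by auto
  have ifm: "integrable \<mu> f" by (rule M.integrable_const_bound[where B=1]) (use bnd fm in auto)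
  have ifn: "integrable \<nu> f" by (rule N.integrable_const_bound[where B=1]) (use bnd fmn sp in auto)
  have igm: "integrable \<mu> g" by (rule M.integrable_const_bound[where B=1]) (use bnd gm in auto)
  have ign: "integrable \<nu> g" by (rule N.integrable_const_bound[where B=1]) (use bnd gmn sp in auto)
  have igmu: "(\<integral>x. g x \<partial>\<mu>) = (\<Sum>k\<in>{1..n}. measure \<mu> (A k)) / n"
    unfolding g_def by (rule int_ind_sum) (use As M.finite_measure_axioms in auto)
  have ignu: "(\<integral>x. g x \<partial>\<nu>) = (\<Sum>k\<in>{1..n}. measure \<nu> (A k)) / n"
    unfolding g_def by (rule int_ind_sum) (use Asn N.finite_measure_axioms in auto)
  have "(\<integral>x. f x \<partial>\<mu>) \<le> (\<integral>x. g x + 1/n \<partial>\<mu>)"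
    by (rule integral_mono) (use ifm igm gb in \<open>auto simp: algebra_simps\<close>)
  also have "\<dots> = (\<integral>x. g x \<partial>\<mu>) + 1/n" using igm by (simp add: M.prob_space)
  finally have 1: "(\<integral>x. f x \<partial>\<mu>) \<le> (\<integral>x. g x \<partial>\<mu>) + 1/n" .
  have 2: "(\<integral>x. g x \<partial>\<nu>) \<le> (\<integral>x. f x \<partial>\<nu>)"
    by (rule integral_mono) (use ifn ign gb sp in auto)
  have "(\<Sum>k\<in>{1..n}. measure \<mu> (A k) - measure \<nu> (A k)) \<le> (\<Sum>k\<in>{1..n}. T)"
    by (rule sum_mono) (use sw As in auto)
  hence "(\<Sum>k\<in>{1..n}. measure \<mu> (A k)) - (\<Sum>k\<in>{1..n}. measure \<nu> (A k)) \<le> n * T"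
    by (simp add: sum_subtractf)
  hence 3: "(\<integral>x. g x \<partial>\<mu>) - (\<integral>x. g x \<partial>\<nu>) \<le> T"
    unfolding igmu ignu using n by (simp add: diff_divide_distrib[symmetric] divide_le_eq mult.commute)
  show ?thesis using 1 2 3 by linarith
qed

lemma tv_bound:
  fixes \<mu> \<nu> :: "'a measure" and f :: "'a \<Rightarrow> real"
  assumes pm: "prob_space \<mu>" and pn: "prob_space \<nu>" and sets_eq: "sets \<nu> = sets \<mu>"
    and fm: "f \<in> borel_measurable \<mu>" and fr: "\<And>x. x \<in> space \<mu> \<Longrightarrow> 0 \<le> f x \<and> f x \<le> 1"
  shows "\<bar>(\<integral>x. f x \<partial>\<mu>) - (\<integral>x. f x \<partial>\<nu>)\<bar> \<le> tv_dist \<mu> \<nu>"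
proof -
  interpret M: prob_space \<mu> by fact
  interpret N: prob_space \<nu> by fact
  have sp: "space \<nu> = space \<mu>" using sets_eq by (rule sets_eq_imp_space_eq)
  have fmn: "f \<in> borel_measurable \<nu>" using fm measurable_cong_sets[OF sets_eq refl] by blast
  define T where "T = tv_dist \<mu> \<nu>"
  have TA: "\<bar>measure \<mu> A - measure \<nu> A\<bar> \<le> T" if "A \<in> sets \<mu>" for A
    unfolding T_def tv_dist_def
  proof (rule cSUP_upper[OF that])
    show "bdd_above ((\<lambda>A. \<bar>measure \<mu> A - measure \<nu> A\<bar>) ` sets \<mu>)"
      by (rule bdd_aboveI[of _ 1])
        (auto simp: abs_le_iff, (smt (verit) M.prob_le_1 N.prob_le_1 measure_nonneg)+)
  qed
  have all: "\<bar>(\<integral>x. f x \<partial>\<mu>) - (\<integral>x. f x \<partial>\<nu>)\<bar> \<le> T + 1 / real n" if n: "n > 0" for n :: nat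
  proof -
    have a: "(\<integral>x. f x \<partial>\<mu>) - (\<integral>x. f x \<partial>\<nu>) \<le> T + 1 / real n"
      by (rule tv_key[OF pm pn sets_eq fm fr n]) (use TA in \<open>auto simp: abs_le_iff\<close>)
    have b: "(\<integral>x. f x \<partial>\<nu>) - (\<integral>x. f x \<partial>\<mu>) \<le> T + 1 / real n"
      by (rule tv_key[OF pn pm sets_eq[symmetric] fmn _ n])
         (use TA fr sp sets_eq in \<open>auto simp: abs_le_iff\<close>)
    show ?thesis using a b by linarith
  qed
  show ?thesis
  proof (rule ccontr)
    assume "\<not> ?thesis"
    hence d: "\<bar>(\<integral>x. f x \<partial>\<mu>) - (\<integral>x. f x \<partial>\<nu>)\<bar> - T > 0" unfolding T_def by simp
    obtain n :: nat where nn: "1 / (\<bar>(\<integral>x. f x \<partial>\<mu>) - (\<integral>x. f x \<partial>\<nu>)\<bar> - T) < n"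
      using reals_Archimedean2 by blast
    have n0: "n > 0" using nn d
      by (metis of_nat_0_less_iff order_less_trans zero_less_divide_1_iff)
    have "1 / real n < \<bar>(\<integral>x. f x \<partial>\<mu>) - (\<integral>x. f x \<partial>\<nu>)\<bar> - T"
      using nn d n0 by (simp add: field_simps)
    thus False using all[OF n0] by linarith
  qed
qed

theorem theorem1:
  fixes MX :: "'x measure" and MY :: "'y measure"
    and dX :: "'x \<Rightarrow> 'x \<Rightarrow> real"
    and D D' :: "('x \<times> 'y) measure"
    and \<gamma> :: "(('x \<times> 'y) \<times> ('x \<times> 'y)) measure"
    and \<epsilon> :: real
    and S :: "'x \<Rightarrow> 'x measure"
    and \<psi> :: "real \<Rightarrow> real"
    and h :: "'x \<times> 'y \<Rightarrow> real"
  assumes dX_nonneg: "\<And>x1 x2. x1 \<in> space MX \<Longrightarrow> x2 \<in> space MX \<Longrightarrow> dX x1 x2 \<ge> 0"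
    and D_prob: "prob_space D" and D_sets: "sets D = sets (MX \<Otimes>\<^sub>M MY)"
    and D'_prob: "prob_space D'" and D'_sets: "sets D' = sets (MX \<Otimes>\<^sub>M MY)"
    and \<gamma>_sets: "sets \<gamma> = sets ((MX \<Otimes>\<^sub>M MY) \<Otimes>\<^sub>M (MX \<Otimes>\<^sub>M MY))"
    and \<gamma>_fst: "distr \<gamma> (MX \<Otimes>\<^sub>M MY) fst = D"
    and \<gamma>_snd: "distr \<gamma> (MX \<Otimes>\<^sub>M MY) snd = D'"
    and cost_meas: "(\<lambda>p. lift_cost dX (fst p) (snd p))
                      \<in> borel_measurable ((MX \<Otimes>\<^sub>M MY) \<Otimes>\<^sub>M (MX \<Otimes>\<^sub>M MY))"
    and eps_nonneg: "\<epsilon> \<ge> 0"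
    and coupling_cost: "(\<integral>\<^sup>+ p. lift_cost dX (fst p) (snd p) \<partial>\<gamma>) \<le> ennreal \<epsilon>"
    and S_kernel: "S \<in> MX \<rightarrow>\<^sub>M prob_algebra MX"
    and \<psi>_concave: "concave_on {0..} \<psi>"
    and \<psi>_mono: "mono_on {0..} \<psi>"
    and S_tv: "\<And>x1 x2. x1 \<in> space MX \<Longrightarrow> x2 \<in> space MX \<Longrightarrow>
                 tv_dist (S x1) (S x2) \<le> \<psi> (dX x1 x2)"
    and h_meas: "h \<in> borel_measurable (MX \<Otimes>\<^sub>M MY)"
    and h_range: "\<And>p. p \<in> space (MX \<Otimes>\<^sub>M MY) \<Longrightarrow> h p \<in> {0..1}"
  shows "\<bar>(\<integral>p. smoothed S h p \<partial>D) - (\<integral>p. smoothed S h p \<partial>D')\<bar> \<le> \<psi> \<epsilon>"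
proof -
  interpret D: prob_space D by fact
  interpret D': prob_space D' by fact
  have Skp: "prob_space (S x) \<and> sets (S x) = sets MX" if "x \<in> space MX" for x
    using measurable_space[OF S_kernel that] by (auto simp: space_prob_algebra)
  have hsec: "(\<lambda>x'. h (x', y)) \<in> borel_measurable MX" if "y \<in> space MY" for y
    using measurable_compose[OF measurable_Pair2'[OF that] h_meas] by simp
  have hsec': "(\<lambda>x'. h (x', y)) \<in> borel_measurable (S x)" if "y \<in> space MY" "x \<in> space MX" for x y
    using hsec[OF that(1)] measurable_cong_sets[OF Skp[OF that(2), THEN conjunct2] refl] by blast
  have spS: "space (S x) = space MX" if "x \<in> space MX" for x
    using Skp[OF that] sets_eq_imp_space_eq by blast
  have hbar_rng: "0 \<le> smoothed S h p \<and> smoothed S h p \<le> 1" if "p \<in> space (MX \<Otimes>\<^sub>M MY)" for p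
  proof -
    obtain x y where p: "p = (x, y)" by (cases p)
    have x: "x \<in> space MX" and y: "y \<in> space MY" using that by (auto simp: p space_pair_measure)
    interpret Sx: prob_space "S x" using Skp[OF x] by blast
    have hr: "0 \<le> h (x', y) \<and> h (x', y) \<le> 1" if "x' \<in> space (S x)" for x'
      using h_range[of "(x', y)"] that spS[OF x] y by (auto simp: space_pair_measure)
    have int: "integrable (S x) (\<lambda>x'. h (x', y))"
      by (rule Sx.integrable_const_bound[where B=1]) (use hr hsec'[OF y x] in auto)
    have "0 \<le> (\<integral>x'. h (x', y) \<partial>S x)" by (rule integral_nonneg_AE) (use hr in auto)
    moreover have "(\<integral>x'. h (x', y) \<partial>S x) \<le> 1" by (rule Sx.integral_le_const[OF int]) (use hr in auto)
    ultimately show ?thesis by (simp add: smoothed_def p)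
  qed
  have hbar_meas: "smoothed S h \<in> borel_measurable (MX \<Otimes>\<^sub>M MY)"
  proof -
    have L: "(\<lambda>p. S (fst p)) \<in> (MX \<Otimes>\<^sub>M MY) \<rightarrow>\<^sub>M subprob_algebra MX"
      by (rule measurable_compose[OF measurable_fst measurable_prob_algebraD[OF S_kernel]])
    have 1: "(\<lambda>p. \<integral>\<^sup>+x'. ennreal (h (x', snd p)) \<partial>S (fst p)) \<in> borel_measurable (MX \<Otimes>\<^sub>M MY)"
      by (rule nn_integral_measurable_subprob_algebra2[where N=MX, OF _ L]) (use h_meas in measurable)
    have 2: "(\<lambda>p. enn2real (\<integral>\<^sup>+x'. ennreal (h (x', snd p)) \<partial>S (fst p))) \<in> borel_measurable (MX \<Otimes>\<^sub>M MY)"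
      using 1 by measurable
    show ?thesis
    proof (rule measurable_cong[THEN iffD1, OF _ 2])
      fix p assume p: "p \<in> space (MX \<Otimes>\<^sub>M MY)"
      hence x: "fst p \<in> space MX" and y: "snd p \<in> space MY" by (auto simp: space_pair_measure)
      show "enn2real (\<integral>\<^sup>+x'. ennreal (h (x', snd p)) \<partial>S (fst p)) = smoothed S h p"
        unfolding smoothed_def
        by (rule integral_eq_nn_integral[symmetric]) (use hsec'[OF y x] h_range spS[OF x] y in \<open>auto simp: space_pair_measure\<close>)
    qed
  qed
  have Gm1: "fst \<in> \<gamma> \<rightarrow>\<^sub>M (MX \<Otimes>\<^sub>M MY)" and Gm2: "snd \<in> \<gamma> \<rightarrow>\<^sub>M (MX \<Otimes>\<^sub>M MY)"
    using measurable_cong_sets[OF \<gamma>_sets refl] by auto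
  have spG: "space \<gamma> = space ((MX \<Otimes>\<^sub>M MY) \<Otimes>\<^sub>M (MX \<Otimes>\<^sub>M MY))"
    using \<gamma>_sets by (rule sets_eq_imp_space_eq)
  have Gp: "prob_space \<gamma>" by (rule prob_space_distrD[OF Gm1]) (use \<gamma>_fst D_prob in simp)
  interpret G: prob_space \<gamma> by fact
  define u1 where "u1 p = smoothed S h (fst p)" for p :: "('x \<times> 'y) \<times> ('x \<times> 'y)"
  define u2 where "u2 p = smoothed S h (snd p)" for p :: "('x \<times> 'y) \<times> ('x \<times> 'y)"
  have u1m: "u1 \<in> borel_measurable \<gamma>" unfolding u1_def by (rule measurable_compose[OF Gm1 hbar_meas])
  have u2m: "u2 \<in> borel_measurable \<gamma>" unfolding u2_def by (rule measurable_compose[OF Gm2 hbar_meas])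
  have u1i: "integrable \<gamma> u1"
    by (rule G.integrable_const_bound[where B=1]) (use u1m hbar_rng spG in \<open>auto simp: u1_def space_pair_measure\<close>)
  have u2i: "integrable \<gamma> u2"
    by (rule G.integrable_const_bound[where B=1]) (use u2m hbar_rng spG in \<open>auto simp: u2_def space_pair_measure\<close>)
  have ED: "(\<integral>p. smoothed S h p \<partial>D) = (\<integral>p. u1 p \<partial>\<gamma>)"
    using integral_distr[OF Gm1 hbar_meas] \<gamma>_fst by (simp add: u1_def)
  have ED': "(\<integral>p. smoothed S h p \<partial>D') = (\<integral>p. u2 p \<partial>\<gamma>)"
    using integral_distr[OF Gm2 hbar_meas] \<gamma>_snd by (simp add: u2_def)
  define cost where "cost p = lift_cost dX (fst p) (snd p)" for p :: "('x \<times> 'y) \<times> ('x \<times> 'y)"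
  have cm: "cost \<in> borel_measurable \<gamma>"
    using cost_meas measurable_cong_sets[OF \<gamma>_sets refl] unfolding cost_def by blast
  define N where "N = (\<integral>\<^sup>+ p. cost p \<partial>\<gamma>)"
  have NE: "N \<le> ennreal \<epsilon>" using coupling_cost by (simp add: N_def cost_def)
  hence Nfin: "N \<noteq> \<infinity>" by (metis ennreal_neq_top infinity_ennreal_def neq_top_trans)
  have AEfin: "AE p in \<gamma>. cost p \<noteq> \<infinity>"
    by (rule nn_integral_PInf_AE[OF cm]) (use Nfin in \<open>simp add: N_def\<close>)
  define r where "r p = enn2real (cost p)" for p
  have rm: "r \<in> borel_measurable \<gamma>" unfolding r_def using cm by measurable
  have rN: "(\<integral>\<^sup>+ p. ennreal (r p) \<partial>\<gamma>) = N"
    unfolding N_def by (rule nn_integral_cong_AE) (use AEfin in \<open>eventually_elim, simp add: r_def ennreal_enn2real_if\<close>)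
  have Neq: "N = ennreal (enn2real N)" using Nfin by (simp add: ennreal_enn2real_if)
  have ri: "integrable \<gamma> r"
    by (rule integrableI_nn_integral_finite[OF rm _ ]) (use rN Neq in \<open>auto simp: r_def\<close>)
  have rint: "(\<integral>p. r p \<partial>\<gamma>) \<le> \<epsilon>"
  proof -
    have "(\<integral>p. r p \<partial>\<gamma>) = enn2real N"
      using integral_eq_nn_integral[OF rm] rN by (simp add: r_def[abs_def])
    also have "\<dots> \<le> \<epsilon>" using NE eps_nonneg
      by (metis enn2real_ennreal enn2real_mono ennreal_neq_top top.not_eq_extremum)
    finally show ?thesis .
  qed
  have pw: "AE p in \<gamma>. \<bar>u1 p - u2 p\<bar> \<le> \<psi> (r p)"
    using AEfin
  proof (rule AE_mp, intro AE_I2 impI)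
    fix p assume pG: "p \<in> space \<gamma>" and fin: "cost p \<noteq> \<infinity>"
    obtain x1 y1 x2 y2 where p: "p = ((x1, y1), (x2, y2))" by (metis prod.collapse)
    have x1: "x1 \<in> space MX" and x2: "x2 \<in> space MX" and y1: "y1 \<in> space MY"
      using pG spG by (auto simp: p space_pair_measure)
    have yy: "y1 = y2" and rp: "r p = dX x1 x2"
      using fin dX_nonneg[OF x1 x2] by (auto simp: cost_def lift_cost_def r_def p split: if_splits)
    have "\<bar>u1 p - u2 p\<bar> = \<bar>(\<integral>x'. h (x', y1) \<partial>S x1) - (\<integral>x'. h (x', y1) \<partial>S x2)\<bar>"
      by (simp add: u1_def u2_def smoothed_def p yy)
    also have "\<dots> \<le> tv_dist (S x1) (S x2)"
    proof (rule tv_bound)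
      show "prob_space (S x1)" "prob_space (S x2)" using Skp x1 x2 by auto
      show "sets (S x2) = sets (S x1)" using Skp x1 x2 by auto
      show "(\<lambda>x'. h (x', y1)) \<in> borel_measurable (S x1)" by (rule hsec'[OF y1 x1])
      show "0 \<le> h (x', y1) \<and> h (x', y1) \<le> 1" if "x' \<in> space (S x1)" for x'
        using h_range[of "(x', y1)"] that spS[OF x1] y1 by (auto simp: space_pair_measure)
    qed
    also have "\<dots> \<le> \<psi> (r p)" using S_tv[OF x1 x2] rp by simp
    finally show "\<bar>u1 p - u2 p\<bar> \<le> \<psi> (r p)" .
  qed
  obtain c where c0: "c \<ge> 0" and tang: "AE p in \<gamma>. \<bar>u1 p - u2 p\<bar> \<le> \<psi> \<epsilon> + c * (r p - \<epsilon>)"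
  proof (cases "\<epsilon> > 0")
    case True
    then obtain c where "c \<ge> 0" and c: "\<forall>t\<ge>0. \<psi> t \<le> \<psi> \<epsilon> + c * (t - \<epsilon>)"
      using concave_supergrad[OF \<psi>_concave \<psi>_mono] by blast
    moreover have "AE p in \<gamma>. \<bar>u1 p - u2 p\<bar> \<le> \<psi> \<epsilon> + c * (r p - \<epsilon>)"
      using pw
    proof eventually_elim
      case (elim p)
      have "r p \<ge> 0" by (simp add: r_def)
      thus ?case using elim c by force
    qed
    ultimately show ?thesis using that by blast
  next
    case False
    hence e0: "\<epsilon> = 0" using eps_nonneg by simp
    have "N = 0" using NE e0 by simp
    hence "AE p in \<gamma>. cost p = 0" using nn_integral_0_iff_AE[OF cm] by (simp add: N_def)
    hence "AE p in \<gamma>. \<bar>u1 p - u2 p\<bar> \<le> \<psi> \<epsilon> + 0 * (r p - \<epsilon>)"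
      using pw by eventually_elim (simp add: r_def e0)
    thus ?thesis using that[of 0] by simp
  qed
  define g where "g p = \<psi> \<epsilon> + c * (r p - \<epsilon>)" for p
  have tg: "AE p in \<gamma>. \<bar>u1 p - u2 p\<bar> \<le> g p" using tang by (simp add: g_def)
  have gi: "integrable \<gamma> g" unfolding g_def using ri by simp
  have gint: "(\<integral>p. g p \<partial>\<gamma>) = \<psi> \<epsilon> + c * ((\<integral>p. r p \<partial>\<gamma>) - \<epsilon>)"
    unfolding g_def using ri by (simp add: G.prob_space algebra_simps)
  have "(\<integral>p. u1 p - u2 p \<partial>\<gamma>) \<le> (\<integral>p. g p \<partial>\<gamma>)"
    by (rule integral_mono_AE) (use u1i u2i gi in auto, use tg in \<open>eventually_elim, auto\<close>)
  moreover have "(\<integral>p. - (u1 p - u2 p) \<partial>\<gamma>) \<le> (\<integral>p. g p \<partial>\<gamma>)"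
    by (rule integral_mono_AE) (use u1i u2i gi in auto, use tg in \<open>eventually_elim, auto\<close>)
  moreover have "(\<integral>p. g p \<partial>\<gamma>) \<le> \<psi> \<epsilon>"
    unfolding gint using c0 rint by (simp add: mult_nonpos_nonneg mult_le_0_iff)
  moreover have "(\<integral>p. u1 p - u2 p \<partial>\<gamma>) = (\<integral>p. u1 p \<partial>\<gamma>) - (\<integral>p. u2 p \<partial>\<gamma>)"
    using u1i u2i by simp
  moreover have "(\<integral>p. - (u1 p - u2 p) \<partial>\<gamma>) = (\<integral>p. u2 p \<partial>\<gamma>) - (\<integral>p. u1 p \<partial>\<gamma>)"
    using u1i u2i by simp
  ultimately show ?thesis unfolding ED ED' abs_le_iff by linarith
qed

end
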